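(* Let $\mathcal{M}=\mathcal{M}_1\times\cdots\times\mathcal{M}_n$ with each $\mathcal{M}_i\subset\mathbb{R}^{m_i}$ nonempty compact convex, and let $f:\mathbb{R}^m\to\mathbb{R}$ be differentiable. Suppose there is a positive semidefinite matrix $H$, partitioned into blocks $H_{ij}$ conformally with the blocks of $x$, such that $f(y)\le f(x)+\langle y-x,\nabla f(x)\rangle+\frac12(y-x)^TH(y-x)$ for all $x,y\in\mathcal{M}$. Define $B_i=\sup_{x_i\in\mathcal{M}_i}x_i^TH_{ii}x_i$, $\mu_{ij}=\sup_{x_i\in\mathcal{M}_i,x_j\in\mathcal{M}_j}x_i^TH_{ij}x_j$, $B=\frac1n\sum_{i=1}^nB_i$, and $\mu=\frac{1}{n(n-1)}\sum_{i\ne j}\mu_{ij}$. Then for every $\tau=1,\dots,n$, $$C_f^{\tau}\le 4\big(\tau B+\tau(\tau-1)\mu\big).$$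
   Context: Notation: $x=(x_{(1)},\dots,x_{(n)})$; for $S\subseteq[n]$, $x_{(S)}$ is the subvector of blocks in $S$, $\mathcal{M}^{(S)}=\prod_{i\in S}\mathcal{M}_i$, $\nabla_{(S)}f$ the partial gradient, $s_{[S]}\in\mathbb{R}^m$ is $s_{(S)}$ padded with zeros outside $S$. Set curvature: $C_f^{(S)}=\sup\frac{2}{\gamma^2}\big(f(y)-f(x)-\langle y_{(S)}-x_{(S)},\nabla_{(S)}f(x)\rangle\big)$ over $x\in\mathcal{M}$, $s_{(S)}\in\mathcal{M}^{(S)}$, $\gamma\in(0,1]$, $y=x+\gamma(s_{[S]}-x_{[S]})$. Expected set curvature: $C_f^\tau=\binom{n}{\tau}^{-1}\sum_{S\subseteq[n],|S|=\tau}C_f^{(S)}$. *)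

theory Defs
  imports "HOL-Analysis.Analysis"
begin

text \<open>The ambient space R^m is real^'m; coordinate j belongs to block blk j.
  A block vector x_(i) is represented by its zero-padding x_[{i}] in real^'m.\<close>

definition restr :: "('m \<Rightarrow> nat) \<Rightarrow> nat set \<Rightarrow> real^'m \<Rightarrow> real^'m" where
  "restr blk S x = (\<chi> j. if blk j \<in> S then x $ j else 0)"

text \<open>M = M_1 x ... x M_n, where Mb i (a set of vectors supported on block i) plays M_i.\<close>
definition prodset :: "('m \<Rightarrow> nat) \<Rightarrow> nat \<Rightarrow> (nat \<Rightarrow> (real^'m) set) \<Rightarrow> (real^'m) set" where
  "prodset blk n Mb = {x. \<forall>i<n. restr blk {i} x \<in> Mb i}"

definition set_curv ::
  "(real^'m \<Rightarrow> real) \<Rightarrow> (real^'m \<Rightarrow> real^'m) \<Rightarrow> ('m \<Rightarrow> nat) \<Rightarrow> nat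
   \<Rightarrow> (nat \<Rightarrow> (real^'m) set) \<Rightarrow> nat set \<Rightarrow> real" where
  "set_curv f df blk n Mb S = Sup {2 / \<gamma>^2 * (f y - f x - restr blk S (y - x) \<bullet> restr blk S (df x)) | x s \<gamma> y.
      x \<in> prodset blk n Mb \<and> (\<forall>i\<in>S. restr blk {i} s \<in> Mb i) \<and> 0 < \<gamma> \<and> \<gamma> \<le> 1 \<and>
      y = x + \<gamma> *\<^sub>R (restr blk S s - restr blk S x)}"

definition exp_curv ::
  "(real^'m \<Rightarrow> real) \<Rightarrow> (real^'m \<Rightarrow> real^'m) \<Rightarrow> ('m \<Rightarrow> nat) \<Rightarrow> nat
   \<Rightarrow> (nat \<Rightarrow> (real^'m) set) \<Rightarrow> nat \<Rightarrow> real" where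
  "exp_curv f df blk n Mb \<tau> =
     (\<Sum>S | S \<subseteq> {..<n} \<and> card S = \<tau>. set_curv f df blk n Mb S) / real (n choose \<tau>)"

end

theory Submission
  imports Defs
begin

lemma restr_sum: "finite S \<Longrightarrow> restr blk S v = (\<Sum>i\<in>S. restr blk {i} v)"
  unfolding restr_def by (simp add: vec_eq_iff sum.delta)

lemma restr_restr: "restr blk S (restr blk T v) = restr blk (S \<inter> T) v"
  unfolding restr_def by (simp add: vec_eq_iff)

lemma restr_add: "restr blk S (u + v) = restr blk S u + restr blk S v"
  unfolding restr_def by (simp add: vec_eq_iff)
lemma restr_diff: "restr blk S (u - v) = restr blk S u - restr blk S v"
  unfolding restr_def by (simp add: vec_eq_iff)
lemma restr_scale: "restr blk S (c *\<^sub>R u) = c *\<^sub>R restr blk S u"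
  unfolding restr_def by (simp add: vec_eq_iff)

lemma restr_inner: "restr blk S u \<bullet> restr blk S v = restr blk S u \<bullet> v"
  unfolding restr_def inner_vec_def by (rule sum.cong) auto

lemma bilin_sum:
  fixes H :: "real^'m^'m"
  shows "(\<Sum>i\<in>S. a i) \<bullet> (H *v (\<Sum>j\<in>T. b j)) = (\<Sum>i\<in>S. \<Sum>j\<in>T. a i \<bullet> (H *v b j))"
proof -
  have "H *v (\<Sum>j\<in>T. b j) = (\<Sum>j\<in>T. H *v b j)"
    using linear_sum[OF matrix_vector_mul_linear[of H]] by simp
  then show ?thesis by (simp add: inner_sum_left inner_sum_right sum.swap[of _ T])
qed

lemma psd_diff:
  fixes H :: "real^'m^'m"
  assumes "\<And>v. 0 \<le> v \<bullet> (H *v v)"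
  shows "(a - b) \<bullet> (H *v (a - b)) \<le> 2 * (a \<bullet> (H *v a)) + 2 * (b \<bullet> (H *v b))"
proof -
  have "0 \<le> (a + b) \<bullet> (H *v (a + b))" by (rule assms)
  then show ?thesis
    by (simp add: matrix_vector_right_distrib matrix_vector_mult_diff_distrib inner_add_left inner_add_right inner_diff_left inner_diff_right)
qed

lemma sum_diag_pairs:
  assumes "finite S"
  shows "(\<Sum>i\<in>S. \<Sum>j\<in>S. g i j) = (\<Sum>i\<in>S. g i i) + (\<Sum>(i,j)\<in>{(i,j). i\<in>S \<and> j\<in>S \<and> i\<noteq>j}. g i j)"
proof -
  have "(\<Sum>i\<in>S. \<Sum>j\<in>S. g i j) = (\<Sum>(i,j)\<in>S\<times>S. g i j)"
    by (simp add: sum.cartesian_product)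
  also have "S\<times>S = (\<lambda>i. (i,i)) ` S \<union> {(i,j). i\<in>S \<and> j\<in>S \<and> i\<noteq>j}" by auto
  also have "(\<Sum>(i,j)\<in>(\<lambda>i. (i,i)) ` S \<union> {(i,j). i\<in>S \<and> j\<in>S \<and> i\<noteq>j}. g i j)
     = (\<Sum>(i,j)\<in>(\<lambda>i. (i,i)) ` S. g i j) + (\<Sum>(i,j)\<in>{(i,j). i\<in>S \<and> j\<in>S \<and> i\<noteq>j}. g i j)"
    by (rule sum.union_disjoint) (use assms in \<open>auto intro: finite_subset[of _ "S\<times>S"]\<close>)
  also have "(\<Sum>(i,j)\<in>(\<lambda>i. (i,i)) ` S. g i j) = (\<Sum>i\<in>S. g i i)"
    by (subst sum.reindex) (auto simp: inj_on_def)
  finally show ?thesis .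
qed

lemma count_subsets:
  assumes "finite A" "T \<subseteq> A" "card T \<le> k"
  shows "card {S. S \<subseteq> A \<and> card S = k \<and> T \<subseteq> S} = (card A - card T) choose (k - card T)"
proof -
  have fT: "finite T" using assms finite_subset by blast
  have "bij_betw (\<lambda>S. S - T) {S. S \<subseteq> A \<and> card S = k \<and> T \<subseteq> S} {U. U \<subseteq> A - T \<and> card U = k - card T}"
  proof (rule bij_betw_byWitness[where f'="\<lambda>U. U \<union> T"])
    show "\<forall>S\<in>{S. S \<subseteq> A \<and> card S = k \<and> T \<subseteq> S}. S - T \<union> T = S" by auto
    show "\<forall>U\<in>{U. U \<subseteq> A - T \<and> card U = k - card T}. U \<union> T - T = U" by auto
    show "(\<lambda>S. S - T) ` {S. S \<subseteq> A \<and> card S = k \<and> T \<subseteq> S} \<subseteq> {U. U \<subseteq> A - T \<and> card U = k - card T}"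
    proof safe
      fix S assume "S \<subseteq> A" "T \<subseteq> S" "k = card S"
      then show "card (S - T) = card S - card T"
        using assms fT by (meson card_Diff_subset finite_subset)
    qed auto
    show "(\<lambda>U. U \<union> T) ` {U. U \<subseteq> A - T \<and> card U = k - card T} \<subseteq> {S. S \<subseteq> A \<and> card S = k \<and> T \<subseteq> S}"
    proof
      fix V assume "V \<in> (\<lambda>U. U \<union> T) ` {U. U \<subseteq> A - T \<and> card U = k - card T}"
      then obtain U where U: "U \<subseteq> A - T" "card U = k - card T" and V: "V = U \<union> T" by auto
      have "finite U" using U assms finite_subset by blast
      moreover have "U \<inter> T = {}" using U by auto
      ultimately have "card (U \<union> T) = card U + card T" using fT by (simp add: card_Un_disjoint)
      then have "card V = k" using U assms V by simp
      then show "V \<in> {S. S \<subseteq> A \<and> card S = k \<and> T \<subseteq> S}" using U V assms by auto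
    qed
  qed
  then have "card {S. S \<subseteq> A \<and> card S = k \<and> T \<subseteq> S} = card {U. U \<subseteq> A - T \<and> card U = k - card T}"
    by (rule bij_betw_same_card)
  also have "\<dots> = card (A - T) choose (k - card T)"
    using assms by (simp add: n_subsets)
  also have "card (A - T) = card A - card T" using assms fT by (simp add: card_Diff_subset)
  finally show ?thesis .
qed


lemma restr_empty: "restr blk {} v = 0"
  unfolding restr_def by (simp add: vec_eq_iff)

lemma cont_pair: "continuous_on M (\<lambda>p::(real^'m) \<times> (real^'m). fst p \<bullet> ((H::real^'m^'m) *v snd p))"
proof -
  have c: "continuous_on UNIV (\<lambda>x::real^'m. H *v x)" by (intro continuous_intros)
  have "continuous_on M (\<lambda>p::(real^'m) \<times> (real^'m). H *v snd p)"
    by (rule continuous_on_compose2[OF c continuous_on_snd]) auto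
  then show ?thesis by (intro continuous_intros)
qed

lemma cont_quad: "continuous_on M (\<lambda>x::real^'m. x \<bullet> ((H::real^'m^'m) *v x))"
  by (intro continuous_intros)

theorem theorem3:
  fixes f :: "real^'m \<Rightarrow> real" and df :: "real^'m \<Rightarrow> real^'m"
    and blk :: "'m \<Rightarrow> nat" and n :: nat and Mb :: "nat \<Rightarrow> (real^'m) set"
    and H :: "real^'m^'m" and \<tau> :: nat
  assumes blocks: "range blk = {..<n}"
    and Mb_block: "\<And>i. i < n \<Longrightarrow> Mb i \<subseteq> {v. \<forall>j. blk j \<noteq> i \<longrightarrow> v $ j = 0}"
    and Mb_ne: "\<And>i. i < n \<Longrightarrow> Mb i \<noteq> {}"
    and Mb_compact: "\<And>i. i < n \<Longrightarrow> compact (Mb i)"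
    and Mb_convex: "\<And>i. i < n \<Longrightarrow> convex (Mb i)"
    and grad: "\<And>x. (f has_derivative (\<lambda>h. df x \<bullet> h)) (at x)"
    and H_sym: "transpose H = H"
    and H_psd: "\<And>v. 0 \<le> v \<bullet> (H *v v)"
    and quad: "\<And>x y. x \<in> prodset blk n Mb \<Longrightarrow> y \<in> prodset blk n Mb \<Longrightarrow>
        f y \<le> f x + (y - x) \<bullet> df x + 1/2 * ((y - x) \<bullet> (H *v (y - x)))"
    and tau: "1 \<le> \<tau>" "\<tau> \<le> n"
  shows "let Bb = (\<lambda>i. Sup {xi \<bullet> (H *v xi) | xi. xi \<in> Mb i});
             mu = (\<lambda>i j. Sup {xi \<bullet> (H *v xj) | xi xj. xi \<in> Mb i \<and> xj \<in> Mb j});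
             B = (1 / real n) * (\<Sum>i<n. Bb i);
             \<mu> = (1 / (real n * (real n - 1))) * (\<Sum>(i,j) \<in> {(i,j). i < n \<and> j < n \<and> i \<noteq> j}. mu i j)
         in exp_curv f df blk n Mb \<tau> \<le> 4 * (real \<tau> * B + real \<tau> * (real \<tau> - 1) * \<mu>)"
proof -
  define Bb where "Bb = (\<lambda>i. Sup {xi \<bullet> (H *v xi) | xi. xi \<in> Mb i})"
  define mu where "mu = (\<lambda>i j. Sup {xi \<bullet> (H *v xj) | xi xj. xi \<in> Mb i \<and> xj \<in> Mb j})"
  define P where "P = {(i,j). i < n \<and> j < n \<and> i \<noteq> j}"
  define PS where "PS = (\<lambda>S::nat set. {(i,j). i \<in> S \<and> j \<in> S \<and> i \<noteq> j})"
  define BS where "BS = (\<lambda>S. (\<Sum>i\<in>S. Bb i) + (\<Sum>(i,j)\<in>PS S. mu i j))"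
  have Bb_ge: "xi \<bullet> (H *v xi) \<le> Bb i" if "i < n" "xi \<in> Mb i" for i xi
  proof -
    have "compact ((\<lambda>x. x \<bullet> (H *v x)) ` Mb i)"
      by (rule compact_continuous_image[OF cont_quad Mb_compact[OF that(1)]])
    then have "bdd_above ((\<lambda>x. x \<bullet> (H *v x)) ` Mb i)"
      by (intro bounded_imp_bdd_above compact_imp_bounded)
    moreover have "{xi \<bullet> (H *v xi) | xi. xi \<in> Mb i} = (\<lambda>x. x \<bullet> (H *v x)) ` Mb i" by auto
    ultimately show ?thesis unfolding Bb_def using that by (auto intro!: cSup_upper)
  qed
  have mu_ge: "xi \<bullet> (H *v xj) \<le> mu i j" if "i < n" "j < n" "xi \<in> Mb i" "xj \<in> Mb j" for i j xi xj
  proof -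
    have "compact ((\<lambda>p. fst p \<bullet> (H *v snd p)) ` (Mb i \<times> Mb j))"
      by (rule compact_continuous_image[OF cont_pair compact_Times[OF Mb_compact[OF that(1)] Mb_compact[OF that(2)]]])
    then have "bdd_above ((\<lambda>p. fst p \<bullet> (H *v snd p)) ` (Mb i \<times> Mb j))"
      by (intro bounded_imp_bdd_above compact_imp_bounded)
    moreover have "{xi \<bullet> (H *v xj) | xi xj. xi \<in> Mb i \<and> xj \<in> Mb j} = (\<lambda>p. fst p \<bullet> (H *v snd p)) ` (Mb i \<times> Mb j)"
      by force
    ultimately show ?thesis unfolding mu_def using that by (auto intro!: cSup_upper)
  qed
  have quadS: "restr blk S w \<bullet> (H *v restr blk S w) \<le> BS S"
    if S: "S \<subseteq> {..<n}" and w: "\<forall>i\<in>S. restr blk {i} w \<in> Mb i" for S w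
  proof -
    have fS: "finite S" using S finite_subset by blast
    have "restr blk S w \<bullet> (H *v restr blk S w)
        = (\<Sum>i\<in>S. \<Sum>j\<in>S. restr blk {i} w \<bullet> (H *v restr blk {j} w))"
      unfolding restr_sum[OF fS, of blk w] by (rule bilin_sum)
    also have "\<dots> = (\<Sum>i\<in>S. restr blk {i} w \<bullet> (H *v restr blk {i} w))
        + (\<Sum>(i,j)\<in>PS S. restr blk {i} w \<bullet> (H *v restr blk {j} w))"
      unfolding PS_def by (rule sum_diag_pairs[OF fS])
    also have "\<dots> \<le> BS S"
      unfolding BS_def
    proof (rule add_mono)
      show "(\<Sum>i\<in>S. restr blk {i} w \<bullet> (H *v restr blk {i} w)) \<le> sum Bb S"
        by (rule sum_mono) (use S w Bb_ge in blast)
      show "(\<Sum>(i,j)\<in>PS S. restr blk {i} w \<bullet> (H *v restr blk {j} w)) \<le> (\<Sum>(i,j)\<in>PS S. mu i j)"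
        by (rule sum_mono) (use S w in \<open>auto simp: PS_def intro!: mu_ge\<close>)
    qed
    finally show ?thesis .
  qed
  define e where "e = (\<lambda>i. SOME v. v \<in> Mb i)"
  have e: "e i \<in> Mb i" if "i < n" for i
    unfolding e_def using Mb_ne[OF that] by (simp add: some_in_eq)
  define x0 where "x0 = (\<chi> j. e (blk j) $ j)"
  have x0: "x0 \<in> prodset blk n Mb"
    unfolding prodset_def
  proof (intro CollectI allI impI)
    fix i assume i: "i < n"
    have "restr blk {i} x0 = e i"
    proof (subst vec_eq_iff, intro allI)
      fix j
      show "restr blk {i} x0 $ j = e i $ j"
        using Mb_block[OF i] e[OF i] by (auto simp: restr_def x0_def)
    qed
    then show "restr blk {i} x0 \<in> Mb i" using e[OF i] by simp
  qed
  have curvS: "set_curv f df blk n Mb S \<le> 4 * BS S" if S: "S \<subseteq> {..<n}" for S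
    unfolding set_curv_def
  proof (rule cSup_least)
    show "{2 / \<gamma>^2 * (f y - f x - restr blk S (y - x) \<bullet> restr blk S (df x)) | x s \<gamma> y.
      x \<in> prodset blk n Mb \<and> (\<forall>i\<in>S. restr blk {i} s \<in> Mb i) \<and> 0 < \<gamma> \<and> \<gamma> \<le> 1 \<and>
      y = x + \<gamma> *\<^sub>R (restr blk S s - restr blk S x)} \<noteq> {}"
      (is "?X \<noteq> {}")
    proof -
      have xs: "\<forall>i\<in>S. restr blk {i} x0 \<in> Mb i" using x0 S unfolding prodset_def by auto
      define y0 where "y0 = x0 + (1::real) *\<^sub>R (restr blk S x0 - restr blk S x0)"
      have "2 / (1::real)^2 * (f y0 - f x0 - restr blk S (y0 - x0) \<bullet> restr blk S (df x0)) \<in> ?X"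
        unfolding mem_Collect_eq
        by (rule exI[of _ x0], rule exI[of _ x0], rule exI[of _ "1::real"], rule exI[of _ y0])
           (use x0 xs y0_def in simp)
      then show ?thesis by blast
    qed
  next
    fix v assume "v \<in> {2 / \<gamma>^2 * (f y - f x - restr blk S (y - x) \<bullet> restr blk S (df x)) | x s \<gamma> y.
      x \<in> prodset blk n Mb \<and> (\<forall>i\<in>S. restr blk {i} s \<in> Mb i) \<and> 0 < \<gamma> \<and> \<gamma> \<le> 1 \<and>
      y = x + \<gamma> *\<^sub>R (restr blk S s - restr blk S x)}"
    then obtain x s \<gamma> y where v: "v = 2 / \<gamma>^2 * (f y - f x - restr blk S (y - x) \<bullet> restr blk S (df x))"
      and x: "x \<in> prodset blk n Mb" and s: "\<forall>i\<in>S. restr blk {i} s \<in> Mb i"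
      and g: "0 < \<gamma>" "\<gamma> \<le> 1" and y: "y = x + \<gamma> *\<^sub>R (restr blk S s - restr blk S x)"
      by blast
    define d where "d = restr blk S s - restr blk S x"
    have yx: "y - x = \<gamma> *\<^sub>R d" using y d_def by simp
    have rd: "restr blk S d = d"
      unfolding d_def restr_diff restr_restr by simp
    have ryx: "restr blk S (y - x) = y - x" using rd yx restr_scale by metis
    have inner_eq: "restr blk S (y - x) \<bullet> restr blk S (df x) = (y - x) \<bullet> df x"
      using restr_inner[of blk S "y - x" "df x"] ryx by simp
    have y_in: "y \<in> prodset blk n Mb"
      unfolding prodset_def
    proof (intro CollectI allI impI)
      fix i assume i: "i < n"
      have xi: "restr blk {i} x \<in> Mb i" using x i unfolding prodset_def by auto
      have ry: "restr blk {i} y = restr blk {i} x + \<gamma> *\<^sub>R (restr blk ({i} \<inter> S) s - restr blk ({i} \<inter> S) x)"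
        unfolding y restr_add restr_scale restr_diff restr_restr by simp
      show "restr blk {i} y \<in> Mb i"
      proof (cases "i \<in> S")
        case True
        then have "{i} \<inter> S = {i}" by auto
        then have "restr blk {i} y = (1 - \<gamma>) *\<^sub>R restr blk {i} x + \<gamma> *\<^sub>R restr blk {i} s"
          using ry by (simp add: algebra_simps)
        then show ?thesis
          using convexD[OF Mb_convex[OF i] xi, of "restr blk {i} s" "1 - \<gamma>" \<gamma>] s True g by auto
      next
        case False
        then have "{i} \<inter> S = {}" by auto
        then show ?thesis using ry xi by (simp add: restr_empty)
      qed
    qed
    have q: "f y \<le> f x + (y - x) \<bullet> df x + 1/2 * ((y - x) \<bullet> (H *v (y - x)))"
      by (rule quad[OF x y_in])
    have qd: "(y - x) \<bullet> (H *v (y - x)) = \<gamma>^2 * (d \<bullet> (H *v d))"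
      unfolding yx by (simp add: matrix_vector_mult_scaleR power2_eq_square)
    have D: "f y - f x - (y - x) \<bullet> df x \<le> \<gamma>^2 / 2 * (d \<bullet> (H *v d))"
      using q qd by simp
    have xS: "\<forall>i\<in>S. restr blk {i} x \<in> Mb i" using x S unfolding prodset_def by auto
    have dd: "d \<bullet> (H *v d) \<le> 4 * BS S"
    proof -
      have "d \<bullet> (H *v d) \<le> 2 * (restr blk S s \<bullet> (H *v restr blk S s)) + 2 * (restr blk S x \<bullet> (H *v restr blk S x))"
        unfolding d_def by (rule psd_diff[OF H_psd])
      also have "\<dots> \<le> 2 * BS S + 2 * BS S"
        using quadS[OF S s] quadS[OF S xS] by linarith
      finally show ?thesis by simp
    qed
    have "v = 2 / \<gamma>^2 * (f y - f x - (y - x) \<bullet> df x)" using v inner_eq by simp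
    also have "\<dots> \<le> 2 / \<gamma>^2 * (\<gamma>^2 / 2 * (d \<bullet> (H *v d)))"
      by (rule mult_left_mono[OF D]) (use g in simp)
    also have "\<dots> = d \<bullet> (H *v d)" using g by (simp add: field_simps)
    also have "\<dots> \<le> 4 * BS S" by (rule dd)
    finally show "v \<le> 4 * BS S" .
  qed
  define F where "F = {S. S \<subseteq> {..<n} \<and> card S = \<tau>}"
  define C where "C = n choose \<tau>"
  define c1 where "c1 = (n - 1) choose (\<tau> - 1)"
  define c2 where "c2 = (if \<tau> < 2 then 0 else (n - 2) choose (\<tau> - 2))"
  define SB where "SB = (\<Sum>i<n. Bb i)"
  define SP where "SP = (\<Sum>(i,j)\<in>P. mu i j)"
  have fF: "finite F" unfolding F_def by (rule finite_subset[of _ "Pow {..<n}"]) auto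
  have fP: "finite P" unfolding P_def by (rule finite_subset[of _ "{..<n} \<times> {..<n}"]) auto
  have Cpos: "0 < C" unfolding C_def using tau by simp
  have sumB: "(\<Sum>S\<in>F. \<Sum>i\<in>S. Bb i) = SB * real c1"
  proof -
    have "(\<Sum>S\<in>F. \<Sum>i\<in>S. Bb i) = (\<Sum>S\<in>F. \<Sum>i<n. if i \<in> S then Bb i else 0)"
    proof (rule sum.cong[OF refl])
      fix S assume "S \<in> F"
      then have "{..<n} \<inter> S = S" unfolding F_def by auto
      then show "(\<Sum>i\<in>S. Bb i) = (\<Sum>i<n. if i \<in> S then Bb i else 0)"
        using sum.inter_restrict[of "{..<n}" Bb S] by simp
    qed
    also have "\<dots> = (\<Sum>i<n. \<Sum>S\<in>F. if i \<in> S then Bb i else 0)" by (rule sum.swap)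
    also have "\<dots> = (\<Sum>i<n. Bb i * real c1)"
    proof (rule sum.cong[OF refl])
      fix i assume i: "i \<in> {..<n}"
      have "(\<Sum>S\<in>F. if i \<in> S then Bb i else 0) = (\<Sum>S\<in>{S\<in>F. i \<in> S}. Bb i)"
        using sum.inter_filter[OF fF, of "\<lambda>_. Bb i" "\<lambda>S. i \<in> S"] by simp
      also have "{S\<in>F. i \<in> S} = {S. S \<subseteq> {..<n} \<and> card S = \<tau> \<and> {i} \<subseteq> S}"
        unfolding F_def by auto
      finally have eq: "(\<Sum>S\<in>F. if i \<in> S then Bb i else 0) = (\<Sum>S\<in>{S. S \<subseteq> {..<n} \<and> card S = \<tau> \<and> {i} \<subseteq> S}. Bb i)" .
      have "card {S. S \<subseteq> {..<n} \<and> card S = \<tau> \<and> {i} \<subseteq> S} = c1"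
        unfolding c1_def using count_subsets[of "{..<n}" "{i}" \<tau>] i tau by simp
      then show "(\<Sum>S\<in>F. if i \<in> S then Bb i else 0) = Bb i * real c1" using eq by simp
    qed
    finally show ?thesis unfolding SB_def by (simp add: sum_distrib_right)
  qed
  have sumP: "(\<Sum>S\<in>F. \<Sum>(i,j)\<in>PS S. mu i j) = SP * real c2"
  proof -
    have "(\<Sum>S\<in>F. \<Sum>p\<in>PS S. case_prod mu p) = (\<Sum>S\<in>F. \<Sum>p\<in>P. if p \<in> PS S then case_prod mu p else 0)"
    proof (rule sum.cong[OF refl])
      fix S assume "S \<in> F"
      then have "P \<inter> PS S = PS S" unfolding F_def P_def PS_def by auto
      then show "(\<Sum>p\<in>PS S. case_prod mu p) = (\<Sum>p\<in>P. if p \<in> PS S then case_prod mu p else 0)"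
        using sum.inter_restrict[OF fP, of "case_prod mu" "PS S"] by simp
    qed
    also have "\<dots> = (\<Sum>p\<in>P. \<Sum>S\<in>F. if p \<in> PS S then case_prod mu p else 0)" by (rule sum.swap)
    also have "\<dots> = (\<Sum>p\<in>P. case_prod mu p * real c2)"
    proof (rule sum.cong[OF refl])
      fix p assume p: "p \<in> P"
      obtain a b where ab: "p = (a,b)" by (cases p)
      have abn: "a < n" "b < n" "a \<noteq> b" using p ab unfolding P_def by auto
      have "(\<Sum>S\<in>F. if p \<in> PS S then case_prod mu p else 0) = (\<Sum>S\<in>{S\<in>F. p \<in> PS S}. case_prod mu p)"
        using sum.inter_filter[OF fF, of "\<lambda>_. case_prod mu p" "\<lambda>S. p \<in> PS S"] by simp
      also have "{S\<in>F. p \<in> PS S} = {S. S \<subseteq> {..<n} \<and> card S = \<tau> \<and> {a,b} \<subseteq> S}"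
        unfolding F_def PS_def ab using abn by auto
      finally have eq: "(\<Sum>S\<in>F. if p \<in> PS S then case_prod mu p else 0) = (\<Sum>S\<in>{S. S \<subseteq> {..<n} \<and> card S = \<tau> \<and> {a,b} \<subseteq> S}. case_prod mu p)" .
      have "card {S. S \<subseteq> {..<n} \<and> card S = \<tau> \<and> {a,b} \<subseteq> S} = c2"
      proof (cases "\<tau> < 2")
        case True
        have "{S. S \<subseteq> {..<n} \<and> card S = \<tau> \<and> {a,b} \<subseteq> S} = {}"
        proof -
          have "\<not> (S \<subseteq> {..<n} \<and> card S = \<tau> \<and> {a,b} \<subseteq> S)" for S
          proof
            assume h: "S \<subseteq> {..<n} \<and> card S = \<tau> \<and> {a,b} \<subseteq> S"
            then have "finite S" using finite_subset by blast
            then have "card {a,b} \<le> card S" using h card_mono by metis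
            then show False using True abn h by simp
          qed
          then show ?thesis by blast
        qed
        then show ?thesis unfolding c2_def using True by simp
      next
        case False
        then show ?thesis
          unfolding c2_def using count_subsets[of "{..<n}" "{a,b}" \<tau>] abn False by (simp add: numeral_2_eq_2)
      qed
      then show "(\<Sum>S\<in>F. if p \<in> PS S then case_prod mu p else 0) = case_prod mu p * real c2" using eq by simp
    qed
    finally show ?thesis unfolding SP_def by (simp add: sum_distrib_right)
  qed
  have c1eq: "real c1 = real \<tau> * real C / real n"
  proof -
    have "Suc (\<tau> - 1) * (n choose Suc (\<tau> - 1)) = n * ((n - 1) choose (\<tau> - 1))"
      by (rule binomial_absorption)
    then have "\<tau> * C = n * c1" using tau unfolding C_def c1_def by simp
    then have "real \<tau> * real C = real n * real c1" by (metis of_nat_mult)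
    then show ?thesis using tau by (simp add: field_simps)
  qed
  have c2eq: "real c2 = real \<tau> * (real \<tau> - 1) * real C / (real n * (real n - 1))"
  proof (cases "\<tau> < 2")
    case True
    then have "\<tau> = 1" using tau by simp
    then show ?thesis unfolding c2_def by simp
  next
    case False
    have "Suc (\<tau> - 2) * ((n - 1) choose Suc (\<tau> - 2)) = (n - 1) * ((n - 1 - 1) choose (\<tau> - 2))"
      by (rule binomial_absorption)
    moreover have "Suc (\<tau> - 2) = \<tau> - 1" "n - 1 - 1 = n - 2" using False by auto
    ultimately have "(\<tau> - 1) * c1 = (n - 1) * c2" unfolding c1_def c2_def using False by simp
    then have "real (\<tau> - 1) * real c1 = real (n - 1) * real c2" by (metis of_nat_mult)
    moreover have "real (\<tau> - 1) = real \<tau> - 1" "real (n - 1) = real n - 1" using False tau by auto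
    ultimately have e2: "(real \<tau> - 1) * real c1 = (real n - 1) * real c2" by simp
    have "real n - 1 > 0" using False tau by simp
    then show ?thesis using e2 c1eq tau by (simp add: field_simps)
  qed
  have main: "exp_curv f df blk n Mb \<tau> \<le> 4 * (real \<tau> * ((1 / real n) * SB) + real \<tau> * (real \<tau> - 1) * ((1 / (real n * (real n - 1))) * SP))"
  proof -
    have "exp_curv f df blk n Mb \<tau> = (\<Sum>S\<in>F. set_curv f df blk n Mb S) / real C"
      unfolding exp_curv_def F_def C_def ..
    also have "\<dots> \<le> (\<Sum>S\<in>F. 4 * BS S) / real C"
      by (rule divide_right_mono[OF sum_mono]) (auto simp: F_def intro!: curvS)
    also have "(\<Sum>S\<in>F. 4 * BS S) = 4 * (SB * real c1 + SP * real c2)"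
      unfolding BS_def by (simp add: sum_distrib_left[symmetric] sum.distrib sumB sumP)
    also have "4 * (SB * real c1 + SP * real c2) / real C = 4 * (real \<tau> * ((1 / real n) * SB) + real \<tau> * (real \<tau> - 1) * ((1 / (real n * (real n - 1))) * SP))"
      unfolding c1eq c2eq using Cpos by (simp add: field_simps)
    finally show ?thesis .
  qed
  show ?thesis using main unfolding Let_def Bb_def mu_def P_def SB_def SP_def .
qed

end
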